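(* Let $\mathbf{X}\in\mathbb{R}^{M\times N_x}$, $\mathbf{Y}\in\mathbb{R}^{M\times N_y}$ with $\mathbf{C}\mathbf{X}\neq0$, $\mathbf{C}\mathbf{Y}\neq0$, and let $\mathbf{K}_X=\mathbf{C}\mathbf{X}\mathbf{X}^\top\mathbf{C}$, $\mathbf{K}_Y=\mathbf{C}\mathbf{Y}\mathbf{Y}^\top\mathbf{C}$. Then $$\frac{\mathrm{CKA}(\mathbf{K}_X,\mathbf{K}_Y)}{\sqrt{\operatorname{rank}(\mathbf{K}_X)\operatorname{rank}(\mathbf{K}_Y)}}\le \mathrm{NBS}(\mathbf{K}_X,\mathbf{K}_Y)^2\le \min\big(\operatorname{rank}(\mathbf{K}_X),\operatorname{rank}(\mathbf{K}_Y)\big)\,\mathrm{CKA}(\mathbf{K}_X,\mathbf{K}_Y).$$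
   Context: $\mathbf{C}=\mathbf{I}-\tfrac1M\mathbf{1}\mathbf{1}^\top$ is the $M\times M$ centering matrix. For PSD $\mathbf{A}$, $\mathbf{A}^{1/2}$ is its unique PSD square root; the fidelity is $\mathcal{F}(\mathbf{A},\mathbf{B})=\operatorname{Tr}[(\mathbf{A}^{1/2}\mathbf{B}\mathbf{A}^{1/2})^{1/2}]$ and the normalized Bures similarity is $\mathrm{NBS}(\mathbf{A},\mathbf{B})=\mathcal{F}(\mathbf{A},\mathbf{B})/\sqrt{\operatorname{Tr}\mathbf{A}\operatorname{Tr}\mathbf{B}}$. Centered kernel alignment is $\mathrm{CKA}(\mathbf{A},\mathbf{B})=\operatorname{Tr}[\mathbf{A}\mathbf{B}]/\sqrt{\operatorname{Tr}[\mathbf{A}^2]\operatorname{Tr}[\mathbf{B}^2]}$. *)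

theory Defs
  imports "HOL-Analysis.Analysis"
begin

definition centering :: "real^'m^'m" where
  "centering = mat 1 - (1 / real CARD('m)) *\<^sub>R (\<chi> i j. 1)"

definition psd :: "real^'m^'m \<Rightarrow> bool" where
  "psd A \<longleftrightarrow> transpose A = A \<and> (\<forall>x. 0 \<le> x \<bullet> (A *v x))"

definition mat_sqrt :: "real^'m^'m \<Rightarrow> real^'m^'m" where
  "mat_sqrt A = (THE S. psd S \<and> S ** S = A)"

definition fidelity :: "real^'m^'m \<Rightarrow> real^'m^'m \<Rightarrow> real" where
  "fidelity A B = trace (mat_sqrt (mat_sqrt A ** B ** mat_sqrt A))"

definition NBS :: "real^'m^'m \<Rightarrow> real^'m^'m \<Rightarrow> real" where
  "NBS A B = fidelity A B / sqrt (trace A * trace B)"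

definition CKA :: "real^'m^'m \<Rightarrow> real^'m^'m \<Rightarrow> real" where
  "CKA A B = trace (A ** B) / sqrt (trace (A ** A) * trace (B ** B))"

end

theory Submission
  imports Defs
begin

definition specM :: "('n \<Rightarrow> real^'n) \<Rightarrow> ('n \<Rightarrow> real) \<Rightarrow> real^'n^'n" where
  "specM q c = (\<chi> r s. \<Sum>i\<in>UNIV. c i * (q i $ r) * (q i $ s))"

definition orthon :: "('n \<Rightarrow> real^'n) \<Rightarrow> bool" where
  "orthon q \<longleftrightarrow> (\<forall>i j. q i \<bullet> q j = (if i = j then 1 else 0))"

lemma specM_mulv: "specM q c *v x = (\<Sum>i\<in>UNIV. (c i * (q i \<bullet> x)) *\<^sub>R q i)"
proof -
  have "(specM q c *v x) $ r = (\<Sum>i\<in>UNIV. (c i * (q i \<bullet> x)) *\<^sub>R q i) $ r" for r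
  proof -
    have "(specM q c *v x) $ r = (\<Sum>s\<in>UNIV. (\<Sum>i\<in>UNIV. c i * (q i $ r) * (q i $ s)) * x $ s)"
      by (simp add: specM_def matrix_vector_mult_def)
    also have "\<dots> = (\<Sum>i\<in>UNIV. \<Sum>s\<in>UNIV. c i * (q i $ r) * (q i $ s) * x $ s)"
      by (simp add: sum_distrib_right, subst sum.swap, simp)
    also have "\<dots> = (\<Sum>i\<in>UNIV. c i * (q i $ r) * (\<Sum>s\<in>UNIV. (q i $ s) * x $ s))"
      by (simp add: sum_distrib_left mult.assoc)
    also have "\<dots> = (\<Sum>i\<in>UNIV. (c i * (q i \<bullet> x)) *\<^sub>R q i) $ r"
      by (simp add: inner_vec_def sum_component mult_ac)
    finally show ?thesis .
  qed
  then show ?thesis by (simp add: vec_eq_iff)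
qed

lemma transpose_specM: "transpose (specM q c) = specM q c"
  by (simp add: specM_def transpose_def vec_eq_iff mult_ac)

lemma trace_specM: assumes "orthon q" shows "trace (specM q c) = (\<Sum>i\<in>UNIV. c i)"
proof -
  have "trace (specM q c) = (\<Sum>r\<in>UNIV. \<Sum>i\<in>UNIV. c i * (q i $ r) * (q i $ r))"
    by (simp add: trace_def specM_def)
  also have "\<dots> = (\<Sum>i\<in>UNIV. c i * (q i \<bullet> q i))"
    by (subst sum.swap, simp add: inner_vec_def sum_distrib_left mult.assoc)
  also have "\<dots> = (\<Sum>i\<in>UNIV. c i)" using assms by (simp add: orthon_def)
  finally show ?thesis .
qed

lemma orthon_dot: "orthon q \<Longrightarrow> q i \<bullet> q j = (if i = j then 1 else 0)"
  by (simp add: orthon_def)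

lemma orthon_sum: assumes "orthon q" shows "(\<Sum>i\<in>UNIV. f i * (q i \<bullet> q j)) = f j"
proof -
  have "(\<Sum>i\<in>UNIV. f i * (q i \<bullet> q j)) = (\<Sum>i\<in>UNIV. if i = j then f j else 0)"
    by (rule sum.cong) (auto simp: orthon_dot[OF assms])
  then show ?thesis by simp
qed

lemma orthon_sum': assumes "orthon q" shows "(\<Sum>i\<in>UNIV. f i * (q j \<bullet> q i)) = f j"
  using orthon_sum[OF assms, of f j] by (simp add: inner_commute)

lemma orthon_sumv: fixes v :: "'n::finite \<Rightarrow> real^'m" assumes "orthon q" shows "(\<Sum>i\<in>UNIV. (f i * (q i \<bullet> q j)) *\<^sub>R v i) = f j *\<^sub>R v j"
proof -
  have "(\<Sum>i\<in>UNIV. (f i * (q i \<bullet> q j)) *\<^sub>R v i) = (\<Sum>i\<in>UNIV. if i = j then f j *\<^sub>R v j else 0)"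
    by (rule sum.cong) (auto simp: orthon_dot[OF assms])
  then show ?thesis by simp
qed

lemma orthon_inj: "orthon q \<Longrightarrow> inj q"
  unfolding orthon_def inj_def by (metis one_neq_zero)

lemma orthon_span: fixes q :: "'n \<Rightarrow> real^'n" assumes "orthon q" shows "span (range q) = UNIV"
proof -
  have po: "pairwise orthogonal (range q)"
    using assms unfolding orthon_def pairwise_def orthogonal_def by auto
  have z: "0 \<notin> range q" using assms unfolding orthon_def by (metis imageE inner_zero_left zero_neq_one)
  have ind: "independent (range q)" by (rule pairwise_orthogonal_independent[OF po z])
  have "card (range q) = CARD('n)" using orthon_inj[OF assms] by (simp add: card_image)
  then have "card (range q) = dim (UNIV :: (real^'n) set)" by simp
  then show ?thesis using card_eq_dim[of "range q" UNIV] ind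
    by (metis finite finite_imageI span_UNIV span_subspace subset_UNIV subspace_UNIV)
qed

lemma orthon_expand: assumes "orthon q" shows "x = (\<Sum>i\<in>UNIV. (q i \<bullet> x) *\<^sub>R q i)"
proof -
  define y where "y = x - (\<Sum>i\<in>UNIV. (q i \<bullet> x) *\<^sub>R q i)"
  have "q j \<bullet> y = 0" for j
  proof -
    have "q j \<bullet> y = q j \<bullet> x - (\<Sum>i\<in>UNIV. (q i \<bullet> x) * (q j \<bullet> q i))"
      by (simp add: y_def inner_diff_right inner_sum_right)
    also have "\<dots> = 0" using orthon_sum'[OF assms, of "\<lambda>i. q i \<bullet> x" j] by simp
    finally show ?thesis .
  qed
  then have "orthogonal y a" if "a \<in> span (range q)" for a
  proof -
    have "orthogonal y z" if "z \<in> range q" for z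
      using that \<open>\<And>j. q j \<bullet> y = 0\<close> by (auto simp: orthogonal_def inner_commute)
    then show ?thesis using orthogonal_to_span[OF \<open>a \<in> span (range q)\<close>, of y] by blast
  qed
  then have "orthogonal y y" using orthon_span[OF assms] by auto
  then have "y = 0" by (simp add: orthogonal_def)
  then show ?thesis by (simp add: y_def)
qed

lemma specM_one: assumes "orthon q" shows "specM q (\<lambda>_. 1) = mat 1"
  by (subst matrix_eq) (simp add: specM_mulv orthon_expand[OF assms, symmetric])

lemma specM_vec: assumes "orthon q" shows "specM q c *v q j = c j *\<^sub>R q j"
  using assms by (simp add: specM_mulv orthon_sumv)

lemma specM_mult: assumes "orthon q" shows "specM q c ** specM q d = specM q (\<lambda>i. c i * d i)"
proof (subst matrix_eq, intro allI)
  fix x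
  have "(specM q c ** specM q d) *v x = specM q c *v (specM q d *v x)"
    by (simp add: matrix_vector_mul_assoc)
  also have "\<dots> = (\<Sum>i\<in>UNIV. (c i * d i * (q i \<bullet> x)) *\<^sub>R q i)"
  proof -
    have h: "(\<Sum>ia\<in>UNIV. d ia * (q ia \<bullet> x * (q i \<bullet> q ia))) = d i * (q i \<bullet> x)" for i
      using orthon_sum'[OF assms, of "\<lambda>ia. d ia * (q ia \<bullet> x)" i] by (simp add: mult.assoc)
    show ?thesis by (simp add: specM_mulv inner_sum_right h mult.assoc)
  qed
  finally show "(specM q c ** specM q d) *v x = specM q (\<lambda>i. c i * d i) *v x"
    by (simp add: specM_mulv)
qed

lemma quad_specM: assumes "orthon q" shows "x \<bullet> (specM q c *v x) = (\<Sum>i\<in>UNIV. c i * (q i \<bullet> x)^2)"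
  by (simp add: specM_mulv inner_sum_right power2_eq_square inner_commute mult_ac)


lemma sym_inner: fixes B :: "real^'n^'n" assumes "transpose B = B"
  shows "a \<bullet> (B *v b) = (B *v a) \<bullet> b"
  by (metis assms dot_lmul_matrix vector_transpose_matrix)

lemma form_zero:
  fixes B :: "real^'n^'n"
  assumes S: "subspace S" and inv: "\<And>x. x\<in>S \<Longrightarrow> B *v x \<in> S" and sym: "transpose B = B"
    and pos: "\<And>x. x\<in>S \<Longrightarrow> 0 \<le> x \<bullet> (B *v x)" and v: "v\<in>S" and z: "v \<bullet> (B *v v) = 0"
  shows "B *v v = 0"
proof -
  define w where "w = B *v v"
  have wS: "w \<in> S" using inv v by (simp add: w_def)
  define c where "c = w \<bullet> w"
  define q where "q = w \<bullet> (B *v w)"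
  have q0: "0 \<le> q" using pos wS by (simp add: q_def)
  define t where "t = - c / (q + 1)"
  have "v + t *\<^sub>R w \<in> S" using S v wS by (simp add: subspace_add subspace_scale)
  then have "0 \<le> (v + t *\<^sub>R w) \<bullet> (B *v (v + t *\<^sub>R w))" by (rule pos)
  also have "\<dots> = v \<bullet> (B *v v) + t * (v \<bullet> (B *v w)) + t * (w \<bullet> (B *v v)) + t * t * q"
    by (simp add: q_def matrix_vector_right_distrib matrix_vector_mult_scaleR inner_add_left inner_add_right algebra_simps)
  also have "v \<bullet> (B *v w) = c" using sym_inner[OF sym, of v w] by (simp add: c_def w_def)
  also have "w \<bullet> (B *v v) = c" by (simp add: c_def w_def)
  finally have "0 \<le> 2 * t * c + t * t * q" using z by (simp add: mult_ac)
  then have "0 \<le> (2 * t * c + t * t * q) * (q + 1)^2" using q0 by simp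
  also have "(2 * t * c + t * t * q) * (q + 1)^2 = 2*c*(t*(q+1))*(q+1) + q*(t*(q+1))^2"
    by (simp add: power2_eq_square algebra_simps)
  also have "t * (q + 1) = -c" using q0 by (simp add: t_def)
  also have "2*c*(-c)*(q+1) + q*(-c)^2 = - c * c * (q + 2)"
    by (simp add: power2_eq_square algebra_simps)
  finally have "c * c * (q + 2) \<le> 0" by simp
  moreover have "0 \<le> c * c" by simp
  moreover have "c * c * 2 \<le> c * c * (q + 2)" using q0 by (intro mult_left_mono) auto
  ultimately have "c * c = 0" by linarith
  then have "c = 0" by simp
  then show ?thesis by (simp add: c_def w_def)
qed

lemma exists_eig:
  fixes A :: "real^'n^'n"
  assumes sym: "transpose A = A" and S: "subspace S" and inv: "\<And>x. x\<in>S \<Longrightarrow> A *v x \<in> S"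
    and ne: "S \<noteq> {0}"
  shows "\<exists>v\<in>S. norm v = 1 \<and> A *v v = (v \<bullet> (A *v v)) *\<^sub>R v"
proof -
  define K where "K = sphere 0 1 \<inter> S"
  have cK: "compact K" unfolding K_def
    by (intro compact_Int_closed compact_sphere closed_subspace S)
  obtain x where x: "x \<in> S" "x \<noteq> 0" using ne S subspace_0 by blast
  have "x /\<^sub>R norm x \<in> K" using x S by (simp add: K_def subspace_scale)
  then have neK: "K \<noteq> {}" by blast
  have "continuous_on K (\<lambda>x. x \<bullet> (A *v x))"
    by (intro continuous_intros)
  then obtain v where vK: "v \<in> K" and vmax: "\<And>y. y \<in> K \<Longrightarrow> y \<bullet> (A *v y) \<le> v \<bullet> (A *v v)"
    using continuous_attains_sup[OF cK neK] by blast
  define l where "l = v \<bullet> (A *v v)"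
  have vS: "v \<in> S" and nv: "norm v = 1" using vK by (auto simp: K_def)
  have bound: "x \<bullet> (A *v x) \<le> l * (x \<bullet> x)" if "x \<in> S" for x
  proof (cases "x = 0")
    case True then show ?thesis by simp
  next
    case False
    define y where "y = x /\<^sub>R norm x"
    have "y \<in> K" using False that S by (simp add: K_def y_def subspace_scale)
    then have "y \<bullet> (A *v y) \<le> l" using vmax by (simp add: l_def)
    moreover have "y \<bullet> (A *v y) = (x \<bullet> (A *v x)) / (norm x)^2"
      by (simp add: y_def matrix_vector_mult_scaleR power2_eq_square divide_inverse mult_ac)
    ultimately have "x \<bullet> (A *v x) \<le> l * (norm x)^2" using False
      by (simp add: divide_le_eq)
    then show ?thesis by (simp add: power2_norm_eq_inner)
  qed
  define B where "B = l *\<^sub>R mat 1 - A"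
  have Bv: "B *v x = l *\<^sub>R x - A *v x" for x
    by (simp add: B_def matrix_vector_mult_diff_rdistrib scaleR_matrix_vector_assoc[symmetric])
  have "B *v v = 0"
  proof (rule form_zero[OF S])
    show "B *v x \<in> S" if "x \<in> S" for x using that inv S by (simp add: Bv subspace_diff subspace_scale)
    show "transpose B = B" using sym by (simp add: B_def transpose_def vec_eq_iff mat_def)
    show "0 \<le> x \<bullet> (B *v x)" if "x \<in> S" for x using bound[OF that] by (simp add: Bv inner_diff_right)
    show "v \<in> S" by (rule vS)
    show "v \<bullet> (B *v v) = 0" using nv by (simp add: Bv inner_diff_right l_def norm_eq_1)
  qed
  then have "A *v v = l *\<^sub>R v" by (simp add: Bv)
  then show ?thesis using vS nv by (auto simp: l_def)
qed


lemma spectral_sub: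
  fixes A :: "real^'n^'n"
  assumes sym: "transpose A = A"
  shows "subspace S \<Longrightarrow> (\<And>x. x\<in>S \<Longrightarrow> A *v x \<in> S) \<Longrightarrow> \<exists>B. B \<subseteq> S \<and> pairwise orthogonal B \<and>
     (\<forall>b\<in>B. norm b = 1 \<and> A *v b = (b \<bullet> (A *v b)) *\<^sub>R b) \<and> span B = S"
proof (induction "dim S" arbitrary: S rule: less_induct)
  case less
  show ?case
  proof (cases "S = {0}")
    case True
    then show ?thesis by (intro exI[of _ "{}"]) auto
  next
    case False
    obtain v where vS: "v \<in> S" and nv: "norm v = 1" and Av: "A *v v = (v \<bullet> (A *v v)) *\<^sub>R v"
      using exists_eig[OF sym less.prems(1) less.prems(2) False] by blast
    define l where "l = v \<bullet> (A *v v)"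
    define S' where "S' = S \<inter> {y. orthogonal v y}"
    have sub': "subspace S'" unfolding S'_def
      by (rule subspace_inter[OF less.prems(1) subspace_orthogonal_to_vector])
    have inv': "A *v x \<in> S'" if "x \<in> S'" for x
    proof -
      have "v \<bullet> (A *v x) = (A *v v) \<bullet> x" by (rule sym_inner[OF sym])
      also have "\<dots> = l * (v \<bullet> x)" using Av by (simp add: l_def[symmetric])
      also have "v \<bullet> x = 0" using that by (simp add: S'_def orthogonal_def)
      finally show ?thesis using that less.prems(2) by (simp add: S'_def orthogonal_def)
    qed
    have vv: "v \<bullet> v = 1" using nv by (simp add: norm_eq_1)
    have "v \<notin> S'" using vv by (auto simp: S'_def orthogonal_def)
    then have "S' \<subset> S" using vS by (auto simp: S'_def)
    then have "span S' \<subset> span S" using sub' less.prems(1) by (simp add: span_eq_iff[THEN iffD2])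
    then have "dim S' < dim S" by (rule dim_psubset)
    then obtain B' where B': "B' \<subseteq> S'" "pairwise orthogonal B'"
        "\<forall>b\<in>B'. norm b = 1 \<and> A *v b = (b \<bullet> (A *v b)) *\<^sub>R b" "span B' = S'"
      using less.hyps[OF _ sub' inv'] by blast
    define B where "B = insert v B'"
    have "B \<subseteq> S" using B'(1) vS by (auto simp: B_def S'_def)
    moreover have "pairwise orthogonal B"
      using B'(1,2) by (auto simp: B_def pairwise_insert S'_def orthogonal_commute)
    moreover have "\<forall>b\<in>B. norm b = 1 \<and> A *v b = (b \<bullet> (A *v b)) *\<^sub>R b"
      using B'(3) nv Av by (auto simp: B_def)
    moreover have "span B = S"
    proof
      show "span B \<subseteq> S" using \<open>B \<subseteq> S\<close> less.prems(1) by (simp add: span_minimal)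
      show "S \<subseteq> span B"
      proof
        fix x assume xS: "x \<in> S"
        have "x - (v \<bullet> x) *\<^sub>R v \<in> S'"
          using xS vS vv less.prems(1)
          by (simp add: S'_def orthogonal_def subspace_diff subspace_scale inner_diff_right)
        then have "x - (v \<bullet> x) *\<^sub>R v \<in> span B" using B'(4) span_mono[of B' B]
          by (auto simp: B_def)
        moreover have "(v \<bullet> x) *\<^sub>R v \<in> span B" by (simp add: B_def span_base span_scale)
        ultimately have "(x - (v \<bullet> x) *\<^sub>R v) + (v \<bullet> x) *\<^sub>R v \<in> span B" by (rule span_add)
        then show "x \<in> span B" by simp
      qed
    qed
    ultimately show ?thesis by blast
  qed
qed

theorem spectral:
  fixes A :: "real^'n^'n"
  assumes sym: "transpose A = A"
  shows "\<exists>q c. orthon q \<and> A = specM q c"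
proof -
  obtain B where B: "pairwise orthogonal B" "\<forall>b\<in>B. norm b = 1 \<and> A *v b = (b \<bullet> (A *v b)) *\<^sub>R b"
    "span B = UNIV"
    using spectral_sub[OF sym, of UNIV] by auto
  have fin: "finite B" using B(1) by (rule pairwise_orthogonal_imp_finite)
  have "0 \<notin> B" using B(2) by force
  then have ind: "independent B" using B(1) pairwise_orthogonal_independent by blast
  have "card B = dim B" using dim_eq_card_independent[OF ind] by simp
  also have "\<dots> = dim (span B)" by (simp add: dim_span)
  also have "\<dots> = CARD('n)" using B(3) by simp
  finally have "card B = card (UNIV :: 'n set)" by simp
  then obtain q where q: "bij_betw q (UNIV :: 'n set) B"
    using finite_same_card_bij[OF finite fin] by metis
  have orth: "orthon q"
    unfolding orthon_def
  proof (intro allI)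
    fix i j
    show "q i \<bullet> q j = (if i = j then 1 else 0)"
    proof (cases "i = j")
      case True
      then show ?thesis using q B(2) by (auto simp: bij_betw_def norm_eq_1)
    next
      case False
      then have "q i \<noteq> q j" using q by (auto simp: bij_betw_def inj_def)
      moreover have "q i \<in> B" "q j \<in> B" using q by (auto simp: bij_betw_def)
      ultimately show ?thesis using B(1) False by (auto simp: pairwise_def orthogonal_def)
    qed
  qed
  define c where "c i = q i \<bullet> (A *v q i)" for i
  have Aq: "A *v q i = c i *\<^sub>R q i" for i
    using q B(2) by (auto simp: bij_betw_def c_def)
  have "A = specM q c"
  proof (subst matrix_eq, intro allI)
    fix x
    have "A *v x = (\<Sum>i\<in>UNIV. (q i \<bullet> (A *v x)) *\<^sub>R q i)" by (rule orthon_expand[OF orth])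
    also have "\<dots> = (\<Sum>i\<in>UNIV. (c i * (q i \<bullet> x)) *\<^sub>R q i)"
      by (simp add: sym_inner[OF sym] Aq)
    finally show "A *v x = specM q c *v x" by (simp add: specM_mulv)
  qed
  then show ?thesis using orth by blast
qed


lemma orthon_indep: fixes q :: "'n \<Rightarrow> real^'n" assumes "orthon q" shows "independent (range q)"
proof -
  have po: "pairwise orthogonal (range q)"
    using assms unfolding orthon_def pairwise_def orthogonal_def by auto
  have z: "0 \<notin> range q" using assms unfolding orthon_def by (metis imageE inner_zero_left zero_neq_one)
  show ?thesis by (rule pairwise_orthogonal_independent[OF po z])
qed

lemma rank_specM: fixes q :: "'n \<Rightarrow> real^'n" assumes o: "orthon q"
  shows "rank (specM q c) = card {i. c i \<noteq> 0}"
proof -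
  define Z where "Z = {i. c i \<noteq> 0}"
  have r: "rank (specM q c) = dim (range (\<lambda>x. specM q c *v x))" by (rule rank_dim_range)
  have "range (\<lambda>x. specM q c *v x) \<subseteq> span (q ` Z)"
  proof
    fix y assume "y \<in> range (\<lambda>x. specM q c *v x)"
    then obtain x where y: "y = (\<Sum>i\<in>UNIV. (c i * (q i \<bullet> x)) *\<^sub>R q i)" by (auto simp: specM_mulv)
    have "(c i * (q i \<bullet> x)) *\<^sub>R q i \<in> span (q ` Z)" for i
    proof (cases "c i = 0")
      case True then show ?thesis by (simp add: span_zero)
    next
      case False
      then have "q i \<in> span (q ` Z)" by (intro span_base) (simp add: Z_def)
      then show ?thesis by (rule span_scale)
    qed
    then show "y \<in> span (q ` Z)" unfolding y by (intro span_sum) auto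
  qed
  then have le: "dim (range (\<lambda>x. specM q c *v x)) \<le> card (q ` Z)"
    by (intro dim_le_card) auto
  have "q ` Z \<subseteq> range (\<lambda>x. specM q c *v x)"
  proof
    fix y assume "y \<in> q ` Z"
    then obtain j where j: "c j \<noteq> 0" "y = q j" by (auto simp: Z_def)
    have "specM q c *v ((1 / c j) *\<^sub>R q j) = q j"
      using j by (simp add: matrix_vector_mult_scaleR specM_vec[OF o])
    then show "y \<in> range (\<lambda>x. specM q c *v x)" using j by (metis rangeI)
  qed
  then have ge: "dim (q ` Z) \<le> dim (range (\<lambda>x. specM q c *v x))" by (rule dim_subset)
  have "independent (q ` Z)" using orthon_indep[OF o] by (rule independent_mono) auto
  then have "dim (q ` Z) = card (q ` Z)" by (rule dim_eq_card_independent)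
  moreover have "card (q ` Z) = card Z" using orthon_inj[OF o] by (simp add: card_image inj_on_def inj_def)
  ultimately show ?thesis using r le ge by (simp add: Z_def)
qed

lemma psd_specM: fixes q :: "'n \<Rightarrow> real^'n" assumes o: "orthon q"
  shows "psd (specM q c) \<longleftrightarrow> (\<forall>i. 0 \<le> c i)"
proof
  assume p: "psd (specM q c)"
  show "\<forall>i. 0 \<le> c i"
  proof
    fix i
    have "0 \<le> q i \<bullet> (specM q c *v q i)" using p by (simp add: psd_def)
    also have "\<dots> = c i" using o by (simp add: specM_vec orthon_dot)
    finally show "0 \<le> c i" .
  qed
next
  assume c: "\<forall>i. 0 \<le> c i"
  show "psd (specM q c)" unfolding psd_def
    using c by (auto simp: transpose_specM quad_specM[OF o] intro!: sum_nonneg)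
qed

lemma sym_psd: "psd A \<Longrightarrow> transpose A = A" by (simp add: psd_def)

lemma specM_zero: "specM q (\<lambda>_. 0) = 0"
  by (simp add: specM_def vec_eq_iff)

lemma transpose_diff: "transpose (A - B) = transpose A - (transpose B :: real^'n^'n)"
  by (simp add: transpose_def vec_eq_iff)

lemma psd_form_zero: assumes "psd S" "v \<bullet> (S *v v) = 0" shows "S *v v = 0"
  using assms by (intro form_zero[of UNIV]) (auto simp: psd_def)

lemma sqrt_exists: fixes A :: "real^'n^'n" assumes "psd A" shows "\<exists>S. psd S \<and> S ** S = A"
proof -
  obtain q c where o: "orthon q" and A: "A = specM q c" using spectral[OF sym_psd[OF assms]] by blast
  have "psd (specM q c)" using assms A by simp
  then have c: "\<forall>i. 0 \<le> c i" using psd_specM[OF o, of c] by blast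
  define S where "S = specM q (\<lambda>i. sqrt (c i))"
  have "psd S" using psd_specM[OF o] c by (simp add: S_def)
  moreover have "S ** S = A" using c by (simp add: S_def A specM_mult[OF o])
  ultimately show ?thesis by blast
qed

lemma sqrt_unique: fixes S T :: "real^'n^'n" assumes S: "psd S" and T: "psd T" and eq: "S ** S = T ** T"
  shows "S = T"
proof -
  have "transpose (S - T) = S - T" using S T by (simp add: transpose_diff psd_def)
  then obtain q m where o: "orthon q" and D: "S - T = specM q m" using spectral by blast
  have "m i = 0" for i
  proof (rule ccontr)
    assume mi: "m i \<noteq> 0"
    define v where "v = q i"
    define a where "a = S *v v"
    define b where "b = T *v v"
    have "a - b = (S - T) *v v" by (simp add: a_def b_def matrix_vector_mult_diff_rdistrib)
    also have "\<dots> = m i *\<^sub>R v" by (simp add: D v_def specM_vec[OF o])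
    finally have ab: "a - b = m i *\<^sub>R v" .
    have "a \<bullet> a = v \<bullet> (S *v (S *v v))" using sym_inner[OF sym_psd[OF S], of v "S *v v"] by (simp add: a_def)
    also have "\<dots> = v \<bullet> (T *v (T *v v))" by (simp add: matrix_vector_mul_assoc eq)
    also have "\<dots> = b \<bullet> b" using sym_inner[OF sym_psd[OF T], of v "T *v v"] by (simp add: b_def)
    finally have "a \<bullet> a - b \<bullet> b = 0" by simp
    moreover have "a \<bullet> a - b \<bullet> b = (a - b) \<bullet> (a + b)" by (simp add: algebra_simps inner_commute)
    moreover have "(a - b) \<bullet> (a + b) = m i * (v \<bullet> a + v \<bullet> b)" by (simp add: ab inner_add_right distrib_left)
    ultimately have "m i * (v \<bullet> a + v \<bullet> b) = 0" by simp
    then have s: "v \<bullet> a + v \<bullet> b = 0" using mi by (metis mult_eq_0_iff)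
    have "0 \<le> v \<bullet> a" "0 \<le> v \<bullet> b" using S T by (auto simp: psd_def a_def b_def)
    then have "v \<bullet> (S *v v) = 0" "v \<bullet> (T *v v) = 0" using s by (auto simp: a_def b_def)
    then have "a = 0" "b = 0" using psd_form_zero S T by (auto simp: a_def b_def)
    then have "m i *\<^sub>R v = 0" using ab by simp
    moreover have "v \<noteq> 0" using o by (metis inner_zero_left orthon_dot v_def zero_neq_one)
    ultimately show False using mi by simp
  qed
  then have "m = (\<lambda>_. 0)" by auto
  then have "S - T = 0" using D specM_zero[of q] by simp
  then show ?thesis by simp
qed

lemma mat_sqrt: assumes "psd A" shows "psd (mat_sqrt A)" "mat_sqrt A ** mat_sqrt A = A"
proof -
  have "\<exists>!S. psd S \<and> S ** S = A" using sqrt_exists[OF assms] sqrt_unique by blast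
  then have "psd (mat_sqrt A) \<and> mat_sqrt A ** mat_sqrt A = A"
    unfolding mat_sqrt_def by (rule theI')
  then show "psd (mat_sqrt A)" "mat_sqrt A ** mat_sqrt A = A" by auto
qed

lemma rank_sq: fixes S :: "real^'n^'n" assumes "transpose S = S" shows "rank (S ** S) = rank S"
proof -
  obtain q c where o: "orthon q" and A: "S = specM q c" using spectral[OF assms] by blast
  show ?thesis by (simp add: A specM_mult[OF o] rank_specM[OF o])
qed

lemma trace_ineqs: fixes R :: "real^'n^'n" assumes "psd R"
  shows "trace (R ** R) \<le> (trace R)^2" "(trace R)^2 \<le> real (rank R) * trace (R ** R)"
    "0 \<le> trace R" "R \<noteq> 0 \<Longrightarrow> 0 < trace R"
proof -
  obtain q c where o: "orthon q" and A: "R = specM q c" using spectral[OF sym_psd[OF assms]] by blast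
  have "psd (specM q c)" using assms A by simp
  then have c: "\<And>i. 0 \<le> c i" using psd_specM[OF o] by simp
  have tr: "trace R = (\<Sum>i\<in>UNIV. c i)" by (simp add: A trace_specM[OF o])
  have tr2: "trace (R ** R) = (\<Sum>i\<in>UNIV. (c i)^2)" by (simp add: A specM_mult[OF o] trace_specM[OF o] power2_eq_square)
  have rk: "rank R = card {i. c i \<noteq> 0}" by (simp add: A rank_specM[OF o])
  have "(\<Sum>i\<in>UNIV. (c i)^2) \<le> (\<Sum>i\<in>UNIV. c i * (\<Sum>j\<in>UNIV. c j))"
    unfolding power2_eq_square
    by (intro sum_mono mult_left_mono member_le_sum c) auto
  also have "\<dots> = (\<Sum>i\<in>UNIV. c i)^2" by (simp add: power2_eq_square sum_distrib_right)
  finally show "trace (R ** R) \<le> (trace R)^2" by (simp add: tr tr2)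
  define Z where "Z = {i. c i \<noteq> 0}"
  have "(\<Sum>i\<in>UNIV. c i) = (\<Sum>i\<in>Z. c i)" by (rule sum.mono_neutral_right) (auto simp: Z_def)
  moreover have "(\<Sum>i\<in>UNIV. (c i)^2) = (\<Sum>i\<in>Z. (c i)^2)" by (rule sum.mono_neutral_right) (auto simp: Z_def)
  moreover have "(\<Sum>i\<in>Z. c i)^2 \<le> (\<Sum>i\<in>Z. (c i)^2) * card Z" by (rule sum_squared_le_sum_of_squares)
  ultimately show "(trace R)^2 \<le> real (rank R) * trace (R ** R)"
    by (simp add: tr tr2 rk Z_def mult.commute)
  show "0 \<le> trace R" using c by (simp add: tr sum_nonneg)
  show "0 < trace R" if "R \<noteq> 0"
  proof -
    have "\<exists>j. c j \<noteq> 0"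
    proof (rule ccontr)
      assume "\<not> (\<exists>j. c j \<noteq> 0)"
      then have "c = (\<lambda>_. 0)" by auto
      then show False using that A specM_zero[of q] by simp
    qed
    then obtain j where "c j \<noteq> 0" by blast
    then have "0 < c j" using c[of j] by simp
    moreover have "c j \<le> (\<Sum>i\<in>UNIV. c i)" by (rule member_le_sum) (auto simp: c)
    ultimately show ?thesis by (simp add: tr)
  qed
qed


lemma transpose_centering: "transpose (centering :: real^'m^'m) = centering"
  by (simp add: centering_def transpose_def vec_eq_iff mat_def)

lemma gram_psd: fixes N :: "real^'k^'m" shows "psd (N ** transpose N)"
  unfolding psd_def
proof (intro conjI allI)
  show "transpose (N ** transpose N) = N ** transpose N" by (simp add: matrix_transpose_mul)
  fix x :: "real^'m"
  have "x \<bullet> ((N ** transpose N) *v x) = (transpose N *v x) \<bullet> (transpose N *v x)"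
    by (metis dot_lmul_matrix matrix_vector_mul_assoc transpose_transpose vector_transpose_matrix)
  then show "0 \<le> x \<bullet> ((N ** transpose N) *v x)" by simp
qed

lemma gram_nz: fixes N :: "real^'k^'m" assumes "N \<noteq> 0" shows "N ** transpose N \<noteq> 0"
proof
  assume z: "N ** transpose N = 0"
  have "transpose N *v x = 0" for x
  proof -
    have "x \<bullet> ((N ** transpose N) *v x) = (transpose N *v x) \<bullet> (transpose N *v x)"
      by (metis dot_lmul_matrix matrix_vector_mul_assoc transpose_transpose vector_transpose_matrix)
    then show ?thesis using z by simp
  qed
  then have "transpose N = 0" by (simp add: matrix_eq)
  then have "N = transpose (0::real^'m^'k)" by (metis transpose_transpose)
  then show False using assms by (simp add: transpose_def vec_eq_iff)
qed

lemma final_arith: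
  fixes a b fa2 fb2 ra rb m t F :: real
  assumes a: "0 < a" and b: "0 < b" and fa: "0 < fa2" and fb: "0 < fb2"
    and fa1: "fa2 \<le> a^2" and fa2: "a^2 \<le> ra * fa2" and fb1: "fb2 \<le> b^2" and fb2': "b^2 \<le> rb * fb2"
    and t0: "0 \<le> t" and tF: "t \<le> F^2" and Fm: "F^2 \<le> m * t"
  shows "t / sqrt (fa2 * fb2) / sqrt (ra * rb) \<le> (F / sqrt (a * b))^2
       \<and> (F / sqrt (a * b))^2 \<le> m * (t / sqrt (fa2 * fb2))"
proof -
  have ra: "0 < ra" using fa2 fa a by (smt (verit) mult_nonpos_nonneg zero_less_power)
  have rb: "0 < rb" using fb2' fb b by (smt (verit) mult_nonpos_nonneg zero_less_power)
  have sq: "(F / sqrt (a * b))^2 = F^2 / (a * b)" using a b by (simp add: power_divide)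
  have s1: "sqrt fa2 \<le> a" using fa1 a by (metis less_imp_le real_sqrt_le_mono real_sqrt_unique abs_of_pos real_sqrt_abs)
  have s2: "sqrt fb2 \<le> b" using fb1 b by (metis less_imp_le real_sqrt_le_mono real_sqrt_unique abs_of_pos real_sqrt_abs)
  have s3: "a \<le> sqrt (ra * fa2)" using fa2 a by (metis less_imp_le real_sqrt_le_mono real_sqrt_abs abs_of_pos)
  have s4: "b \<le> sqrt (rb * fb2)" using fb2' b by (metis less_imp_le real_sqrt_le_mono real_sqrt_abs abs_of_pos)
  have "sqrt fa2 * sqrt fb2 \<le> a * b" using s1 s2 a fb by (intro mult_mono) auto
  then have d1: "sqrt (fa2 * fb2) \<le> a * b" by (simp add: real_sqrt_mult)
  have d2: "a * b \<le> sqrt (fa2 * fb2) * sqrt (ra * rb)"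
  proof -
    have "a * b \<le> sqrt (ra * fa2) * sqrt (rb * fb2)" using s3 s4 a b ra fa by (intro mult_mono) auto
    also have "\<dots> = sqrt (fa2 * fb2) * sqrt (ra * rb)" by (simp add: real_sqrt_mult mult_ac)
    finally show ?thesis .
  qed
  have pos1: "0 < sqrt (fa2 * fb2)" using fa fb by simp
  have pos2: "0 < sqrt (ra * rb)" using ra rb by simp
  have "t / sqrt (fa2 * fb2) / sqrt (ra * rb) = t / (sqrt (fa2 * fb2) * sqrt (ra * rb))" by simp
  also have "\<dots> \<le> t / (a * b)" using d2 t0 a b pos1 pos2 by (intro divide_left_mono) auto
  also have "\<dots> \<le> F^2 / (a * b)" using tF a b by (intro divide_right_mono) auto
  finally have L: "t / sqrt (fa2 * fb2) / sqrt (ra * rb) \<le> (F / sqrt (a * b))^2" using sq by simp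
  have "F^2 / (a * b) \<le> m * t / (a * b)" using Fm a b by (intro divide_right_mono) auto
  also have "\<dots> \<le> m * t / sqrt (fa2 * fb2)"
  proof -
    have "0 \<le> m * t" using Fm by (smt (verit) zero_le_power2)
    moreover have "0 < a * b * sqrt (fa2 * fb2)" using a b pos1 by simp
    ultimately show ?thesis using d1 by (intro divide_left_mono) auto
  qed
  finally have U: "(F / sqrt (a * b))^2 \<le> m * (t / sqrt (fa2 * fb2))" using sq by simp
  show ?thesis using L U by blast
qed

theorem mainTheorem4:
  fixes X :: "real^'nx^'m" and Y :: "real^'ny^'m"
    and KX KY :: "real^'m^'m"
  assumes "centering ** X \<noteq> 0" and "centering ** Y \<noteq> 0"
    and "KX = centering ** X ** transpose X ** centering"
    and "KY = centering ** Y ** transpose Y ** centering"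
  shows "CKA KX KY / sqrt (real (rank KX) * real (rank KY)) \<le> (NBS KX KY)\<^sup>2
       \<and> (NBS KX KY)\<^sup>2 \<le> real (min (rank KX) (rank KY)) * CKA KX KY"
proof -
  have KX: "KX = (centering ** X) ** transpose (centering ** X)"
    using assms(3) by (simp add: matrix_transpose_mul transpose_centering matrix_mul_assoc)
  have KY: "KY = (centering ** Y) ** transpose (centering ** Y)"
    using assms(4) by (simp add: matrix_transpose_mul transpose_centering matrix_mul_assoc)
  have pA: "psd KX" using KX gram_psd by metis
  have pB: "psd KY" using KY gram_psd by metis
  have nA: "KX \<noteq> 0" using KX gram_nz assms(1) by metis
  have nB: "KY \<noteq> 0" using KY gram_nz assms(2) by metis
  define SA where "SA = mat_sqrt KX"
  have pSA: "psd SA" and SA2: "SA ** SA = KX" using mat_sqrt[OF pA] by (auto simp: SA_def)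
  define P where "P = SA ** KY ** SA"
  have symP: "transpose P = P"
    using sym_psd[OF pSA] sym_psd[OF pB] by (simp add: P_def matrix_transpose_mul matrix_mul_assoc)
  have pP: "psd P" unfolding psd_def
  proof (intro conjI allI)
    show "transpose P = P" by (rule symP)
    fix x
    have "x \<bullet> (P *v x) = (SA *v x) \<bullet> (KY *v (SA *v x))"
      using sym_inner[OF sym_psd[OF pSA], of x] by (simp add: P_def matrix_vector_mul_assoc[symmetric])
    then show "0 \<le> x \<bullet> (P *v x)" using pB by (simp add: psd_def)
  qed
  define R where "R = mat_sqrt P"
  have pR: "psd R" and R2: "R ** R = P" using mat_sqrt[OF pP] by (auto simp: R_def)
  have trP: "trace P = trace (KX ** KY)"
  proof -
    have "trace P = trace ((SA ** KY) ** SA)" by (simp add: P_def)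
    also have "\<dots> = trace (SA ** (SA ** KY))" by (rule trace_mul_sym)
    finally show ?thesis by (simp add: matrix_mul_assoc SA2)
  qed
  have rkR: "rank R = rank P" using rank_sq[OF sym_psd[OF pR]] R2 by simp
  have rkSA: "rank SA = rank KX" using rank_sq[OF sym_psd[OF pSA]] SA2 by simp
  have rP1: "rank P \<le> rank KX"
    using rank_mul_le_left[of "SA ** KY" SA] rank_mul_le_left[of SA KY] rkSA by (simp add: P_def)
  have rP2: "rank P \<le> rank KY"
    using rank_mul_le_left[of "SA ** KY" SA] rank_mul_le_right[of SA KY] by (simp add: P_def)
  note iR = trace_ineqs[OF pR]
  note iA = trace_ineqs[OF pA]
  note iB = trace_ineqs[OF pB]
  have t0: "0 \<le> trace P" using trace_ineqs(3)[OF pP] .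
  have aP: "0 < trace KX" using iA(4) nA by simp
  have bP: "0 < trace KY" using iB(4) nB by simp
  have fa: "0 < trace (KX ** KX)"
  proof -
    have "0 < (trace KX)^2" using aP by simp
    then have "0 < real (rank KX) * trace (KX ** KX)" using iA(2) by linarith
    then show ?thesis by (simp add: zero_less_mult_iff)
  qed
  have fb: "0 < trace (KY ** KY)"
  proof -
    have "0 < (trace KY)^2" using bP by simp
    then have "0 < real (rank KY) * trace (KY ** KY)" using iB(2) by linarith
    then show ?thesis by (simp add: zero_less_mult_iff)
  qed
  have Fm: "(trace R)^2 \<le> real (min (rank KX) (rank KY)) * trace P"
  proof -
    have "(trace R)^2 \<le> real (rank R) * trace (R ** R)" by (rule iR(2))
    also have "\<dots> = real (rank P) * trace P" using rkR R2 by simp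
    also have "\<dots> \<le> real (min (rank KX) (rank KY)) * trace P"
      using rP1 rP2 t0 by (intro mult_right_mono) auto
    finally show ?thesis .
  qed
  have tF: "trace P \<le> (trace R)^2" using iR(1) R2 by simp
  have "fidelity KX KY = trace R" by (simp add: fidelity_def R_def P_def SA_def)
  then have NBS: "NBS KX KY = trace R / sqrt (trace KX * trace KY)" by (simp add: NBS_def)
  have CKA: "CKA KX KY = trace P / sqrt (trace (KX ** KX) * trace (KY ** KY))" by (simp add: CKA_def trP)
  show ?thesis unfolding NBS CKA
    by (rule final_arith[OF aP bP fa fb iA(1) iA(2) iB(1) iB(2) t0 tF Fm])
qed

end
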